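(* Let $d\ge2$, $2\le m\le d$, $\boldsymbol{x},\boldsymbol{y}\in\mathbb{R}^d$ and $v=\|\boldsymbol{x}+\boldsymbol{y}\|_2$. For the orthogonal coupling (ORFs), $$\rho_{\mathrm{ORF}}(\boldsymbol{x},\boldsymbol{y})=\frac{\Gamma(\frac d2)}{\Gamma(d)}\sum_{k=0}^\infty\frac{v^{2k}}{2^kk!}\frac{\Gamma(k+d)}{\Gamma(k+\frac d2)},$$ and for the simplex coupling (SimRFs), $$\rho_{\mathrm{SimRF}}(\boldsymbol{x},\boldsymbol{y})=\frac{\sqrt\pi}{\Gamma(\frac d2)2^{d-1}}\sum_{k=0}^\infty\frac{\Gamma(k+d)}{\Gamma(k+\frac d2)}\frac{v^{2k}}{2^k}\sum_{p=0}^k\Big(-\frac{1}{d-1}\Big)^p\frac{\Gamma(\frac{d+p}{2})}{\Gamma(\frac{d+p+1}{2})}\frac{1}{(k-p)!\,p!}.$$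
   Context: RF-conformity of random vectors $\boldsymbol{w}_1,\dots,\boldsymbol{w}_m$: $\rho(\boldsymbol{x},\boldsymbol{y})=\frac{\Gamma(d/2)}{m(m-1)}\sum_{i}\sum_{j\ne i}\mathbb{E}\big(\sum_{k\ge0}\frac{v^{2k}w_{ij}^{2k}}{2^{2k}k!\,\Gamma(k+d/2)}\big)$, $w_{ij}=\|\boldsymbol{w}_i+\boldsymbol{w}_j\|_2$. Let $w_1,\dots,w_d$ be i.i.d. $\chi_d$ and $\mathbf{R}$ Haar-distributed on $\mathrm{O}(d)$, independent. ORFs: $\boldsymbol{w}_i$ ($i\le m$) are rows of $\mathrm{diag}(w_1,\dots,w_d)\mathbf{R}$ (mutually orthogonal directions). SimRFs: $\boldsymbol{w}_i$ ($i\le m$) are rows of $\mathrm{diag}(w_1,\dots,w_d)\mathbf{S}\mathbf{R}$, where $\mathbf{S}$ has rows $\boldsymbol{s}_i=\sqrt{\frac{d}{d-1}}\mathbf{e}_i-\frac{\sqrt d+1}{(d-1)^{3/2}}(1,\dots,1,0)^\top$ ($1\le i<d$), $\boldsymbol{s}_d=\frac{1}{\sqrt{d-1}}(1,\dots,1,0)^\top$; these are unit vectors with pairwise inner product $-\frac1{d-1}$. *)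

theory Defs
  imports "HOL-Probability.Probability"
begin

definition chi_density :: "nat \<Rightarrow> real \<Rightarrow> real" where
  "chi_density d x = (if x > 0 then x ^ (d - 1) * exp (- (x\<^sup>2) / 2)
       / (2 powr (real d / 2 - 1) * Gamma (real d / 2)) else 0)"

text \<open>Haar probability measure on the orthogonal group O(d), seen as a measure on
  d x d real matrices: a Borel probability measure concentrated on the orthogonal
  matrices and invariant under left multiplication by orthogonal matrices.\<close>
definition orth_haar :: "(real^'n^'n) measure \<Rightarrow> bool" where
  "orth_haar N \<longleftrightarrow> prob_space N \<and> sets N = sets borel
     \<and> emeasure N {R. orthogonal_matrix R} = 1
     \<and> (\<forall>Q. orthogonal_matrix Q \<longrightarrow> distr N borel (\<lambda>R. Q ** R) = N)"

text \<open>Coordinates are enumerated by e : {0..<d} -> 'n, so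
  coordinate number i (1-based i+1) is e i; the last coordinate is e (d-1).
  Row e i (i < d-1) is s_{i+1}; row e (d-1) is s_d.\<close>
definition simplex_matrix :: "(nat \<Rightarrow> 'n::finite) \<Rightarrow> real^'n^'n" where
  "simplex_matrix e = (\<chi> r.
     (let d = real CARD('n);
          u = (\<chi> k. if k = e (CARD('n) - 1) then 0 else (1::real))
      in if r = e (CARD('n) - 1) then (1 / sqrt (d - 1)) *\<^sub>R u
         else sqrt (d / (d - 1)) *\<^sub>R axis r 1 - ((sqrt d + 1) / (d - 1) powr (3/2)) *\<^sub>R u))"

definition rf_kernel :: "nat \<Rightarrow> real \<Rightarrow> real \<Rightarrow> real" where
  "rf_kernel d v w = (\<Sum>k. v ^ (2*k) * w ^ (2*k)
       / (2 ^ (2*k) * fact k * Gamma (real k + real d / 2)))"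

definition rf_conformity ::
  "'a measure \<Rightarrow> nat \<Rightarrow> nat \<Rightarrow> real \<Rightarrow> (nat \<Rightarrow> 'a \<Rightarrow> real^'n) \<Rightarrow> real" where
  "rf_conformity M d m v wv = Gamma (real d / 2) / (real m * (real m - 1)) *
     (\<Sum>i<m. \<Sum>j\<in>{..<m} - {i}.
        integral\<^sup>L M (\<lambda>\<omega>. rf_kernel d v (norm (wv i \<omega> + wv j \<omega>))))"

definition orf_vecs ::
  "('n \<Rightarrow> 'a \<Rightarrow> real) \<Rightarrow> ('a \<Rightarrow> real^'n^'n) \<Rightarrow> (nat \<Rightarrow> 'n) \<Rightarrow> nat \<Rightarrow> 'a \<Rightarrow> real^'n" where
  "orf_vecs W R e i \<omega> = W (e i) \<omega> *\<^sub>R (R \<omega> $ e i)"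

definition simrf_vecs ::
  "('n \<Rightarrow> 'a \<Rightarrow> real) \<Rightarrow> ('a \<Rightarrow> real^'n^'n) \<Rightarrow> (nat \<Rightarrow> 'n::finite) \<Rightarrow> nat \<Rightarrow> 'a \<Rightarrow> real^'n" where
  "simrf_vecs W R e i \<omega> = W (e i) \<omega> *\<^sub>R ((simplex_matrix e ** R \<omega>) $ e i)"

end

theory Submission
  imports Defs
begin

lemma Gamma_plus1_pos: "(x::real) > 0 \<Longrightarrow> Gamma (x + 1) = x * Gamma x"
  by (rule Gamma_plus1) (auto dest: nonpos_Ints_nonpos)

lemma Gamma_half_nat: "Gamma (real j + 1/2) = sqrt pi * fact (2*j) / (4^j * fact j)"
proof (induction j)
  case 0 then show ?case by (simp add: Gamma_one_half_real)
next
  case (Suc j)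
  have "Gamma (real (Suc j) + 1/2) = (real j + 1/2) * Gamma (real j + 1/2)"
    using Gamma_plus1_pos[of "real j + 1/2"] by (simp add: add_ac)
  also have "\<dots> = (real j + 1/2) * (sqrt pi * fact (2*j) / (4^j * fact j))"
    by (simp only: Suc)
  also have "\<dots> = sqrt pi * fact (2*Suc j) / (4^Suc j * fact (Suc j))"
  proof -
    have "fact (2*Suc j) = (fact (2*j) * (2*real j+1) * (2*real j + 2) :: real)"
      by (simp add: algebra_simps)
    moreover have "fact (Suc j) = (fact j * (real j + 1) :: real)" by simp
    moreover have Z: "(4::real)^Suc j * fact (Suc j) \<noteq> 0" by simp
    ultimately show ?thesis
      by (simp only: nonzero_eq_divide_eq[OF Z]) (simp add: field_simps)
  qed
  finally show ?case .
qed

lemma half_moment: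
  "has_bochner_integral lborel (\<lambda>x::real. indicator {0..} x *\<^sub>R (exp (-x\<^sup>2)*x^n))
     (Gamma ((real n + 1)/2) / 2)"
proof (cases "even n")
  case True
  then obtain k where n: "n = 2*k" by auto
  have "Gamma ((real n + 1)/2) = Gamma (real k + 1/2)" by (simp add: n field_simps)
  also have "\<dots> = sqrt pi * fact (2 * k) / (2 ^ (2 * k) * fact k)"
    by (simp add: Gamma_half_nat power_mult)
  finally have eq: "Gamma ((real n + 1)/2) / 2 = (sqrt pi / 2) * (fact (2 * k) / (2 ^ (2 * k) * fact k))"
    by simp
  show ?thesis unfolding eq unfolding n by (rule gaussian_moment_even_pos)
next
  case False
  then obtain k where n: "n = 2*k+1" using oddE by blast
  have "(real n + 1)/2 = 1 + real k" by (simp add: n field_simps)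
  then have "Gamma ((real n + 1)/2) = Gamma (1 + real k)" by (simp only:)
  also have "\<dots> = fact k" by (rule Gamma_fact)
  finally have eq: "Gamma ((real n + 1)/2) / 2 = fact k / 2" by simp
  show ?thesis unfolding eq unfolding n by (rule gaussian_moment_odd_pos)
qed

lemma half_moment2:
  "has_bochner_integral lborel (\<lambda>y::real. indicator {0..} y * (exp (-y\<^sup>2/2)*y^n))
     (sqrt 2 ^ (n+1) * Gamma ((real n + 1)/2) / 2)"
proof -
  have c: "1 / sqrt 2 \<noteq> (0::real)" by simp
  have h: "has_bochner_integral lborel
     (\<lambda>y. indicator {0..} (0 + 1 / sqrt 2 * y) *\<^sub>R (exp (-(0 + 1 / sqrt 2 * y)\<^sup>2)*(0 + 1 / sqrt 2 * y)^n))
     ((Gamma ((real n + 1)/2) / 2) /\<^sub>R \<bar>1 / sqrt 2\<bar>)"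
    by (rule lborel_has_bochner_integral_real_affine_iff[OF c, where t=0, THEN iffD1, OF half_moment[of n]])
  have h2: "has_bochner_integral lborel
     (\<lambda>y. sqrt 2 ^ n * (indicator {0..} (0 + 1 / sqrt 2 * y) *\<^sub>R (exp (-(0 + 1 / sqrt 2 * y)\<^sup>2)*(0 + 1 / sqrt 2 * y)^n)))
     (sqrt 2 ^ n * ((Gamma ((real n + 1)/2) / 2) /\<^sub>R \<bar>1 / sqrt 2\<bar>))"
    by (rule has_bochner_integral_mult_right) (rule h)
  show ?thesis
  proof (rule has_bochner_integral_cong[THEN iffD1, OF refl _ _ h2])
    fix y :: real
    have i: "indicator {0..} (y / sqrt 2) = (indicator {0..} y :: real)"
      by (simp add: indicator_def zero_le_divide_iff)
    have p: "exp (- (y / sqrt 2)\<^sup>2) = exp (-(y\<^sup>2/2))" by (simp add: power_mult_distrib power_divide)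
    have q: "y ^ n = sqrt 2 ^ n * (y / sqrt 2)^n" by (simp add: power_mult_distrib power_divide)
    show "sqrt 2 ^ n * (indicator {0..} (0 + 1 / sqrt 2 * y) *\<^sub>R (exp (-(0 + 1 / sqrt 2 * y)\<^sup>2)*(0 + 1 / sqrt 2 * y)^n))
      = indicator {0..} y * (exp (-y\<^sup>2/2)*y^n)"
      by (simp add: i p q mult_ac)
  next
    show "sqrt 2 ^ n * ((Gamma ((real n + 1)/2) / 2) /\<^sub>R \<bar>1 / sqrt 2\<bar>) = sqrt 2 ^ (n+1) * Gamma ((real n + 1)/2) / 2"
      by simp
  qed
qed

lemma chi_moment:
  assumes d: "d \<ge> 2"
  shows "has_bochner_integral lborel (\<lambda>a. chi_density d a * a ^ s)
     (sqrt 2 ^ s * Gamma ((real d + real s)/2) / Gamma (real d / 2))"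
proof -
  define n where "n = d - 1 + s"
  have n1: "n \<ge> 1" using d by (simp add: n_def)
  define C where "C = 2 powr (real d / 2 - 1) * Gamma (real d / 2)"
  have Cpos: "C > 0" using d by (simp add: C_def)
  have pw: "2 powr (real d / 2 - 1) = sqrt 2 ^ d / 2"
  proof -
    have "2 powr (real d / 2 - 1) = 2 powr (real d / 2) / 2" by (simp add: powr_diff)
    also have "2 powr (real d / 2) = sqrt 2 ^ d"
    proof -
      have "sqrt 2 ^ d = (2 powr (1/2)) ^ d" by (simp add: powr_half_sqrt)
      also have "\<dots> = (2 powr (1/2)) powr (real d)" by (simp add: powr_realpow)
      also have "\<dots> = 2 powr (real d / 2)" by (simp add: powr_powr)
      finally show ?thesis by simp
    qed
    finally show ?thesis .
  qed
  have h: "has_bochner_integral lborel (\<lambda>y::real. (1/C) * (indicator {0..} y * (exp (-y\<^sup>2/2)*y^n)))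
     ((1/C) * (sqrt 2 ^ (n+1) * Gamma ((real n + 1)/2) / 2))"
    by (rule has_bochner_integral_mult_right) (rule half_moment2)
  show ?thesis
  proof (rule has_bochner_integral_cong[THEN iffD1, OF refl _ _ h])
    fix a :: real
    show "1 / C * (indicator {0..} a * (exp (- a\<^sup>2 / 2) * a ^ n)) = chi_density d a * a ^ s"
    proof (cases "a > 0")
      case True
      have "a ^ n = a ^ (d-1) * a ^ s" by (simp add: n_def power_add)
      then show ?thesis using True by (simp add: chi_density_def C_def)
    next
      case False
      then show ?thesis using n1 by (cases "a = 0") (auto simp: chi_density_def indicator_def)
    qed
  next
    have n1': "real n + 1 = real d + real s" using d by (simp add: n_def)
    have "sqrt 2 ^ (n+1) = sqrt 2 ^ d * sqrt 2 ^ s" using d by (simp add: n_def power_add[symmetric])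
    then show "1 / C * (sqrt 2 ^ (n + 1) * Gamma ((real n + 1) / 2) / 2) =
      sqrt 2 ^ s * Gamma ((real d + real s) / 2) / Gamma (real d / 2)"
      using d unfolding n1' C_def pw by (simp add: field_simps)
  qed
qed

lemma vand_gamma:
  assumes "(a::real) > 0"
  shows "(\<Sum>q\<le>n. real (n choose q) * Gamma (a + real q) * Gamma (a + real (n - q)))
     = Gamma a ^ 2 * Gamma (2*a + real n) / Gamma (2*a)"
proof -
  have na: "a \<notin> \<int>\<^sub>\<le>\<^sub>0" "2*a \<notin> \<int>\<^sub>\<le>\<^sub>0" using assms by (auto dest: nonpos_Ints_nonpos)
  have g: "Gamma (a + real q) = Gamma a * pochhammer a q" for q
    using pochhammer_Gamma[OF na(1), of q] Gamma_real_pos[OF assms] by (simp add: field_simps)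
  have g2: "Gamma (2*a + real n) = Gamma (2*a) * pochhammer (2*a) n"
  proof -
    have "Gamma (2*a) > 0" using assms by simp
    then show ?thesis using pochhammer_Gamma[OF na(2), of n] by (simp add: field_simps)
  qed
  have "(\<Sum>q\<le>n. real (n choose q) * Gamma (a + real q) * Gamma (a + real (n - q)))
      = Gamma a ^ 2 * (\<Sum>q\<le>n. real (n choose q) * pochhammer a q * pochhammer a (n - q))"
    unfolding sum_distrib_left
  proof (rule sum.cong[OF refl])
    fix q assume "q \<in> {..n}"
    show "real (n choose q) * Gamma (a + real q) * Gamma (a + real (n - q)) =
      Gamma a ^ 2 * (real (n choose q) * pochhammer a q * pochhammer a (n - q))"
      unfolding g[of q] g[of "n-q"] by (simp add: power2_eq_square mult_ac)
  qed
  also have "(\<Sum>q\<le>n. real (n choose q) * pochhammer a q * pochhammer a (n - q)) = pochhammer (a + a) n"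
    by (rule pochhammer_binomial_sum[symmetric])
  also have "\<dots> = Gamma (2*a + real n) / Gamma (2*a)"
  proof -
    have aa: "a + a = 2*a" by simp
    have "Gamma (2*a) > 0" using assms by simp
    then show ?thesis unfolding aa g2 by simp
  qed
  finally show ?thesis by (simp only: times_divide_eq_right)
qed

lemma dup_real:
  assumes "(z::real) > 0"
  shows "Gamma z * Gamma (z + 1/2) = exp ((1 - 2*z) * ln 2) * sqrt pi * Gamma (2*z)"
proof -
  have n1: "complex_of_real z \<notin> \<int>\<^sub>\<le>\<^sub>0" using assms
    by (auto simp: of_real_in_nonpos_Ints_iff dest: nonpos_Ints_nonpos)
  have n2: "complex_of_real z + 1/2 \<notin> \<int>\<^sub>\<le>\<^sub>0"
  proof -
    have e: "complex_of_real z + 1/2 = complex_of_real (z + 1/2)" by simp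
    have "z + 1/2 \<notin> \<int>\<^sub>\<le>\<^sub>0" using assms by (auto dest: nonpos_Ints_nonpos)
    then show ?thesis unfolding e of_real_in_nonpos_Ints_iff .
  qed
  have "complex_of_real (Gamma z * Gamma (z + 1/2)) = Gamma (complex_of_real z) * Gamma (complex_of_real z + 1/2)"
    by (simp add: Gamma_complex_of_real[symmetric])
  also have "\<dots> = exp ((1 - 2*complex_of_real z) * of_real (ln 2)) * of_real (sqrt pi) * Gamma (2*complex_of_real z)"
    by (rule Gamma_legendre_duplication[OF n1 n2])
  also have "\<dots> = complex_of_real (exp ((1 - 2*z) * ln 2) * sqrt pi * Gamma (2*z))"
  proof -
    have e1: "(1 - 2*complex_of_real z) * of_real (ln 2) = of_real ((1 - 2*z) * ln 2)" by simp
    have e2: "Gamma (2*complex_of_real z) = of_real (Gamma (2*z))"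
      by (metis Gamma_complex_of_real of_real_mult of_real_numeral)
    show ?thesis unfolding e1 e2 exp_of_real by (simp only: of_real_mult)
  qed
  finally show ?thesis by (simp only: of_real_eq_iff)
qed

lemma dup_nat:
  assumes "n \<ge> 1"
  shows "Gamma (real n / 2) * Gamma ((real n + 1) / 2) * 2 ^ (n - 1) = sqrt pi * Gamma (real n)"
proof -
  have z: "real n / 2 > 0" using assms by simp
  have e: "exp ((1 - 2*(real n / 2)) * ln 2) * 2 ^ (n - 1) = 1"
  proof -
    have "exp ((1 - 2*(real n / 2)) * ln 2) = 2 powr (- real (n - 1))"
    proof -
      have "(1 - 2*(real n / 2)) * ln 2 = - real (n - 1) * ln 2" using assms by (simp add: of_nat_diff)
      then show ?thesis by (simp add: powr_def)
    qed
    also have "\<dots> = 1 / 2 ^ (n - 1)" by (simp add: powr_minus powr_realpow divide_inverse)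
    finally show ?thesis by simp
  qed
  have eq: "(real n + 1) / 2 = real n / 2 + 1/2" by (simp add: field_simps)
  have "Gamma (real n / 2) * Gamma ((real n + 1) / 2) = exp ((1 - 2*(real n / 2)) * ln 2) * sqrt pi * Gamma (real n)"
    unfolding eq using dup_real[OF z] by simp
  then have "Gamma (real n / 2) * Gamma ((real n + 1) / 2) * 2 ^ (n - 1) =
     (exp ((1 - 2*(real n / 2)) * ln 2) * 2 ^ (n - 1)) * sqrt pi * Gamma (real n)"
    by (simp only: mult_ac)
  then show ?thesis unfolding e by simp
qed

lemma row_mult: "(A ** B) $ i = (A $ i) v* (B :: real^'n^'m)"
  by (simp add: vec_eq_iff matrix_matrix_mult_def vector_matrix_mult_def)

lemma axis_vmult: "axis i 1 v* (B :: real^'n^'m) = B $ i"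
  by (simp add: vec_eq_iff vector_matrix_mult_def axis_def mult_delta_left)

lemma orth_norm_vmult:
  assumes "orthogonal_matrix (R :: real^'n^'n)"
  shows "norm (x v* R) = norm x"
proof -
  have "inner (x v* R) (x v* R) = inner x (R *v (x v* R))" by (rule dot_lmul_matrix)
  also have "R *v (x v* R) = R *v (transpose R *v x)" by simp
  also have "\<dots> = (R ** transpose R) *v x" by (rule matrix_vector_mul_assoc)
  also have "\<dots> = x" using assms by (simp add: orthogonal_matrix_def)
  finally have "inner (x v* R) (x v* R) = inner x x" .
  then show ?thesis by (simp add: norm_eq_sqrt_inner)
qed

lemma vmult_lin: "(a *\<^sub>R u + b *\<^sub>R w) v* (R :: real^'n^'n) = a *\<^sub>R (u v* R) + b *\<^sub>R (w v* R)"
  by (simp add: vec_eq_iff vector_matrix_mult_def sum.distrib sum_distrib_left algebra_simps)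

lemma norm2_comb: "(norm (a *\<^sub>R u + b *\<^sub>R w))\<^sup>2 =
   a\<^sup>2 * inner u u + b\<^sup>2 * inner w w + 2 * a * b * inner u w"
  unfolding power2_norm_eq_inner by (simp add: inner_add_left inner_add_right inner_commute power2_eq_square algebra_simps)

lemma simplex_consts:
  fixes d :: real
  assumes d: "d \<ge> 2"
  defines "a \<equiv> sqrt (d / (d - 1))" and "c \<equiv> (sqrt d + 1) / (d - 1) powr (3/2)"
  shows "a\<^sup>2 - 2*a*c + c\<^sup>2 * (d - 1) = 1"
    and "- 2*a*c + c\<^sup>2 * (d - 1) = -1 / (d - 1)"
    and "(a - c * (d - 1)) / sqrt (d - 1) = -1 / (d - 1)"
    and "(1 / sqrt (d - 1))\<^sup>2 * (d - 1) = 1"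
proof -
  define s where "s = sqrt d"
  define q where "q = sqrt (d - 1)"
  have q0: "q > 0" using d by (simp add: q_def)
  have s0: "s > 0" using d by (simp add: s_def)
  have qq: "q\<^sup>2 = d - 1" using d by (simp add: q_def)
  have ss: "s\<^sup>2 = d" using d by (simp add: s_def)
  have a: "a = s / q" by (simp add: a_def s_def q_def real_sqrt_divide)
  have p32: "(d - 1) powr (3/2) = q ^ 3"
  proof -
    have e: "(3/2::real) = 1 + 1/2" by simp
    have "(d - 1) powr (3/2) = (d - 1) powr 1 * (d - 1) powr (1/2)" unfolding e by (rule powr_add)
    also have "\<dots> = (d - 1) * (d - 1) powr (1/2)" using d by simp
    also have "\<dots> = q\<^sup>2 * q" using d by (simp add: qq powr_half_sqrt q_def)
    finally show ?thesis by (simp add: power3_eq_cube power2_eq_square)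
  qed
  have c: "c = (s + 1) / q ^ 3" by (simp add: c_def p32 s_def)
  have q4: "q ^ 4 = (d - 1)\<^sup>2" using qq by (metis power2_eq_square power_add numeral_Bit0 numeral_One mult_2 one_plus_numeral one_add_one)
  show "a\<^sup>2 - 2*a*c + c\<^sup>2 * (d - 1) = 1"
  proof -
    have "a\<^sup>2 - 2*a*c + c\<^sup>2 * (d - 1) = (s\<^sup>2 * q\<^sup>2 - 2 * s * (s+1) + (s+1)\<^sup>2) / q^4"
      unfolding a c qq[symmetric] using q0 by (simp add: field_simps power2_eq_square power3_eq_cube) algebra
    also have "s\<^sup>2 * q\<^sup>2 - 2 * s * (s+1) + (s+1)\<^sup>2 = q^4"
      unfolding qq q4 using ss by (simp add: power2_eq_square algebra_simps)
    finally show ?thesis using q0 by simp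
  qed
  show "- 2*a*c + c\<^sup>2 * (d - 1) = -1 / (d - 1)"
  proof -
    have "- 2*a*c + c\<^sup>2 * (d - 1) = ((s+1)\<^sup>2 - 2 * s * (s+1)) / q^4"
      unfolding a c qq[symmetric] using q0 by (simp add: field_simps power2_eq_square power3_eq_cube) algebra
    also have "(s+1)\<^sup>2 - 2 * s * (s+1) = -(q\<^sup>2)"
      unfolding qq by (simp add: power2_eq_square algebra_simps ss[unfolded power2_eq_square])
    finally show ?thesis using q0 unfolding q4 qq[symmetric] by (simp add: power2_eq_square)
  qed
  show "(a - c * (d - 1)) / sqrt (d - 1) = -1 / (d - 1)"
  proof -
    have "(a - c * (d - 1)) / sqrt (d - 1) = (s / q - (s + 1) / q) / q"
      unfolding a c qq[symmetric] q_def[symmetric] using q0 by (simp add: field_simps power2_eq_square power3_eq_cube)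
    also have "\<dots> = -1 / q\<^sup>2" using q0 by (simp add: field_simps power2_eq_square)
    finally show ?thesis by (simp add: qq)
  qed
  show "(1 / sqrt (d - 1))\<^sup>2 * (d - 1) = 1" using d by (simp add: power_divide)
qed

lemma inner_U:
  fixes z :: "'n::finite"
  defines "U \<equiv> (\<chi> k. if k = z then 0 else (1::real))"
  shows "inner U U = real CARD('n) - 1" and "inner (axis r 1) U = (if r = z then 0 else 1)"
proof -
  have "inner U U = (\<Sum>k\<in>UNIV. if k = z then 0 else (1::real))"
    by (simp add: U_def inner_vec_def if_distrib cong: if_cong)
  also have "\<dots> = (\<Sum>k\<in>UNIV - {z}. 1)"
    by (simp add: sum.If_cases Diff_eq Int_commute)
  also have "\<dots> = real CARD('n) - 1" by (simp add: card_Diff_singleton of_nat_diff)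
  finally show "inner U U = real CARD('n) - 1" .
  show "inner (axis r 1) U = (if r = z then 0 else 1)" by (simp add: inner_axis' U_def)
qed

lemma simplex_inner:
  fixes e :: "nat \<Rightarrow> 'n::finite"
  assumes d2: "CARD('n) \<ge> 2" and ij: "i \<noteq> j"
  shows "inner (simplex_matrix e $ i) (simplex_matrix e $ i) = 1"
    and "inner (simplex_matrix e $ i) (simplex_matrix e $ j) = -1 / (real CARD('n) - 1)"
proof -
  define d where "d = real CARD('n)"
  define z where "z = e (CARD('n) - 1)"
  define U where "U = (\<chi> k. if k = z then 0 else (1::real))"
  define a where "a = sqrt (d / (d - 1))"
  define c where "c = (sqrt d + 1) / (d - 1) powr (3/2)"
  have d: "d \<ge> 2" using d2 by (simp add: d_def)
  note K = simplex_consts[OF d, folded a_def c_def]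
  have UU: "inner U U = d - 1" unfolding U_def d_def by (rule inner_U)
  have aU: "inner (axis r 1) U = (if r = z then 0 else 1)" for r unfolding U_def by (rule inner_U)
  have Ua: "inner U (axis r 1) = (if r = z then 0 else 1)" for r using aU by (simp add: inner_commute)
  have row: "simplex_matrix e $ r = (if r = z then (1 / sqrt (d - 1)) *\<^sub>R U
        else a *\<^sub>R axis r 1 - c *\<^sub>R U)" for r
    by (simp add: simplex_matrix_def Let_def d_def z_def U_def a_def c_def)
  have ax: "inner (axis r (1::real) :: real^'n) (axis r' 1) = (if r = r' then 1 else (0::real))" for r r'
    by (simp add: inner_axis_axis inner_real_def)
  show "inner (simplex_matrix e $ i) (simplex_matrix e $ i) = 1"
  proof (cases "i = z")
    case True
    then show ?thesis using K(4) by (simp add: row UU power2_eq_square)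
  next
    case False
    then show ?thesis using K(1)
      by (simp add: row UU aU Ua ax inner_diff_left inner_diff_right power2_eq_square algebra_simps)
  qed
  show "inner (simplex_matrix e $ i) (simplex_matrix e $ j) = -1 / (real CARD('n) - 1)"
  proof (cases "i = z")
    case True
    then have "j \<noteq> z" using ij by simp
    then show ?thesis using True K(3) d
      by (simp add: row UU aU Ua ax inner_diff_left inner_diff_right d_def field_simps)
  next
    case False
    show ?thesis
    proof (cases "j = z")
      case True
      then show ?thesis using False K(3) d
        by (simp add: row UU aU Ua ax inner_diff_left inner_diff_right d_def field_simps)
    next
      case False2: False
      then show ?thesis using False K(2) ij
        by (simp add: row UU aU Ua ax inner_diff_left inner_diff_right power2_eq_square d_def algebra_simps)
    qed
  qed
qed

lemma orf_sum_norm: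
  assumes R: "orthogonal_matrix (R :: real^'n^'n)" and pq: "p \<noteq> q"
  shows "(norm (a *\<^sub>R (R $ p) + b *\<^sub>R (R $ q)))\<^sup>2 = a\<^sup>2 + b\<^sup>2"
proof -
  have "a *\<^sub>R (R $ p) + b *\<^sub>R (R $ q) = (a *\<^sub>R axis p 1 + b *\<^sub>R axis q 1) v* R"
    by (simp add: vmult_lin axis_vmult)
  then have "norm (a *\<^sub>R (R $ p) + b *\<^sub>R (R $ q)) = norm (a *\<^sub>R axis p (1::real) + b *\<^sub>R axis q 1)"
    using orth_norm_vmult[OF R] by simp
  then show ?thesis using pq by (simp add: norm2_comb inner_axis_axis)
qed

lemma sim_sum_norm:
  fixes e :: "nat \<Rightarrow> 'n::finite"
  assumes R: "orthogonal_matrix (R :: real^'n^'n)" and pq: "p \<noteq> q" and d2: "CARD('n) \<ge> 2"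
  shows "(norm (a *\<^sub>R ((simplex_matrix e ** R) $ p) + b *\<^sub>R ((simplex_matrix e ** R) $ q)))\<^sup>2
     = a\<^sup>2 + b\<^sup>2 - 2 * a * b / (real CARD('n) - 1)"
proof -
  let ?S = "simplex_matrix e"
  have "a *\<^sub>R ((?S ** R) $ p) + b *\<^sub>R ((?S ** R) $ q) = (a *\<^sub>R (?S $ p) + b *\<^sub>R (?S $ q)) v* R"
    by (simp add: vmult_lin row_mult)
  then have "norm (a *\<^sub>R ((?S ** R) $ p) + b *\<^sub>R ((?S ** R) $ q)) = norm (a *\<^sub>R (?S $ p) + b *\<^sub>R (?S $ q))"
    using orth_norm_vmult[OF R] by simp
  moreover have "inner (?S $ q) (?S $ q) = 1" using simplex_inner[OF d2] pq by metis
  ultimately show ?thesis using simplex_inner[OF d2 pq]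
    by (simp add: norm2_comb)
qed

lemma ratio_summable:
  fixes f :: "nat \<Rightarrow> real"
  assumes nn: "\<And>k. f k \<ge> 0" and C: "C \<ge> 0"
    and r: "\<And>k. f (Suc k) \<le> C / (real k + 1) * f k"
  shows "summable f"
proof (rule summable_ratio_test[where c="1/2" and N="nat \<lceil>2*C\<rceil>"])
  fix n assume n: "n \<ge> nat \<lceil>2*C\<rceil>"
  then have "real n \<ge> 2*C" by linarith
  then have "C / (real n + 1) \<le> 1/2" using C by (simp add: field_simps)
  then have "C / (real n + 1) * f n \<le> 1/2 * f n" using nn[of n] by (rule mult_right_mono)
  then have "f (Suc n) \<le> 1/2 * f n" using r[of n] by linarith
  then show "norm (f (Suc n)) \<le> 1/2 * norm (f n)" using nn[of n] nn[of "Suc n"] by simp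
qed simp

definition cK :: "nat \<Rightarrow> real \<Rightarrow> nat \<Rightarrow> real" where
  "cK d v k = v ^ (2*k) / (2 ^ (2*k) * fact k * Gamma (real k + real d / 2))"

lemma cK_nonneg: "d \<ge> 1 \<Longrightarrow> cK d v k \<ge> 0"
  by (simp add: cK_def)

lemma cK_Suc:
  assumes "d \<ge> 1"
  shows "cK d v (Suc k) = cK d v k * (v\<^sup>2 / (4 * (real k + 1) * (real k + real d / 2)))"
proof -
  have pos: "real k + real d / 2 > 0" using assms by simp
  have g: "Gamma (real (Suc k) + real d / 2) = (real k + real d / 2) * Gamma (real k + real d / 2)"
    using Gamma_plus1_pos[OF pos] by (simp add: add_ac)
  have "Gamma (real k + real d / 2) > 0" using pos by simp
  then show ?thesis using pos unfolding cK_def g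
    by (simp add: power_add power_mult field_simps power2_eq_square)
qed

lemma summable_kernel_terms:
  assumes d: "d \<ge> 2" and x: "x \<ge> 0"
  shows "summable (\<lambda>k. cK d v k * x ^ k)"
proof (rule ratio_summable[where C = "v\<^sup>2 * x / 4"])
  fix k
  have pos: "real k + real d / 2 \<ge> 1" using d by simp
  have "cK d v (Suc k) * x ^ Suc k = (cK d v k * x ^ k) * (v\<^sup>2 * x / (4 * (real k + 1) * (real k + real d / 2)))"
    using d by (simp add: cK_Suc field_simps)
  also have "\<dots> \<le> (cK d v k * x ^ k) * (v\<^sup>2 * x / 4 / (real k + 1))"
  proof (rule mult_left_mono)
    have "v\<^sup>2 * x / (4 * (real k + 1) * (real k + real d / 2)) = (v\<^sup>2 * x / 4 / (real k + 1)) / (real k + real d / 2)"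
      by (simp add: field_simps)
    also have "\<dots> \<le> v\<^sup>2 * x / 4 / (real k + 1)"
      using pos x divide_left_mono[of 1 "real k + real d / 2" "v\<^sup>2 * x / 4 / (real k + 1)"] by simp
    finally show "v\<^sup>2 * x / (4 * (real k + 1) * (real k + real d / 2)) \<le> v\<^sup>2 * x / 4 / (real k + 1)" .
    show "0 \<le> cK d v k * x ^ k" using d x by (simp add: cK_nonneg)
  qed
  finally show "cK d v (Suc k) * x ^ Suc k \<le> v\<^sup>2 * x / 4 / (real k + 1) * (cK d v k * x ^ k)"
    by (simp add: mult_ac)
qed (use d x in \<open>auto simp: cK_nonneg\<close>)

lemma aux_ratio_alg:
  fixes A v P Q D G g :: real
  assumes "P \<noteq> 0" "Q \<noteq> 0" "g \<noteq> 0"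
  shows "A * (v\<^sup>2 / (4 * P * Q)) * (4 ^ Suc k * (D * G) / g) = (A * (4 ^ k * G / g)) * (v\<^sup>2 * D / (P * Q))"
  using assms by (simp add: field_simps)

lemma summable_bound_terms:
  assumes d: "d \<ge> 2"
  shows "summable (\<lambda>k. cK d v k * (4 ^ k * Gamma (real d + real k) / Gamma (real d)))"
proof (rule ratio_summable[where C = "2 * v\<^sup>2"])
  fix k
  have pos: "real k + real d / 2 \<ge> 1" using d by simp
  have pos2: "real d + real k > 0" using d by simp
  have gdpos: "Gamma (real d) > 0" using d by simp
  have gd: "Gamma (real d + real (Suc k)) = (real d + real k) * Gamma (real d + real k)"
    using Gamma_plus1_pos[OF pos2] by (simp add: add_ac)
  have "cK d v (Suc k) * (4 ^ Suc k * Gamma (real d + real (Suc k)) / Gamma (real d))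
     = (cK d v k * (4 ^ k * Gamma (real d + real k) / Gamma (real d))) *
       (v\<^sup>2 * (real d + real k) / ((real k + 1) * (real k + real d / 2)))"
    unfolding gd cK_Suc[OF order_trans[OF one_le_numeral d]] by (rule aux_ratio_alg[OF _ _ gdpos[THEN less_imp_neq, symmetric]]) (use d in auto)
  also have "\<dots> \<le> (cK d v k * (4 ^ k * Gamma (real d + real k) / Gamma (real d))) * (2 * v\<^sup>2 / (real k + 1))"
  proof (rule mult_left_mono)
    have r: "(real d + real k) / (real k + real d / 2) \<le> 2" using pos by (simp add: divide_le_eq)
    have "v\<^sup>2 * (real d + real k) / ((real k + 1) * (real k + real d / 2))
        = (v\<^sup>2 / (real k + 1)) * ((real d + real k) / (real k + real d / 2))" by simp
    also have "\<dots> \<le> (v\<^sup>2 / (real k + 1)) * 2" by (rule mult_left_mono[OF r]) simp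
    finally show "v\<^sup>2 * (real d + real k) / ((real k + 1) * (real k + real d / 2)) \<le> 2 * v\<^sup>2 / (real k + 1)"
      by (simp add: mult.commute)
    show "0 \<le> cK d v k * (4 ^ k * Gamma (real d + real k) / Gamma (real d))"
      using d by (simp add: cK_nonneg)
  qed
  finally show "cK d v (Suc k) * (4 ^ Suc k * Gamma (real d + real (Suc k)) / Gamma (real d))
     \<le> 2 * v\<^sup>2 / (real k + 1) * (cK d v k * (4 ^ k * Gamma (real d + real k) / Gamma (real d)))"
    by (simp add: mult_ac)
qed (use d in \<open>auto simp: cK_nonneg\<close>)

definition mom :: "nat \<Rightarrow> nat \<Rightarrow> real" where
  "mom d s = sqrt 2 ^ s * Gamma ((real d + real s) / 2) / Gamma (real d / 2)"

definition Qf :: "real \<Rightarrow> real \<Rightarrow> real \<Rightarrow> real" where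
  "Qf t a b = a\<^sup>2 + b\<^sup>2 - 2 * t * a * b"

lemma poly_expand:
  "Qf t a b ^ k = (\<Sum>p\<le>k. \<Sum>q\<le>k-p. real (k choose p) * real ((k-p) choose q) * (-2*t)^p
      * (a ^ (p + 2*q) * b ^ (p + 2*(k-p-q))))"
proof -
  have "Qf t a b ^ k = ((-2*t*a*b) + (a\<^sup>2 + b\<^sup>2)) ^ k" by (simp add: Qf_def algebra_simps)
  also have "\<dots> = (\<Sum>p\<le>k. real (k choose p) * (-2*t*a*b)^p * (a\<^sup>2 + b\<^sup>2)^(k-p))"
    by (rule binomial_ring)
  also have "\<dots> = (\<Sum>p\<le>k. \<Sum>q\<le>k-p. real (k choose p) * real ((k-p) choose q) * (-2*t)^p
      * (a ^ (p + 2*q) * b ^ (p + 2*(k-p-q))))"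
  proof (rule sum.cong[OF refl])
    fix p assume p: "p \<in> {..k}"
    have "(a\<^sup>2 + b\<^sup>2)^(k-p) = (\<Sum>q\<le>k-p. real ((k-p) choose q) * (a\<^sup>2)^q * (b\<^sup>2)^(k-p-q))"
      by (rule binomial_ring)
    then have "real (k choose p) * (-2*t*a*b)^p * (a\<^sup>2 + b\<^sup>2)^(k-p) =
       (\<Sum>q\<le>k-p. real (k choose p) * (-2*t*a*b)^p * (real ((k-p) choose q) * (a\<^sup>2)^q * (b\<^sup>2)^(k-p-q)))"
      by (simp add: sum_distrib_left)
    also have "\<dots> = (\<Sum>q\<le>k-p. real (k choose p) * real ((k-p) choose q) * (-2*t)^p
      * (a ^ (p + 2*q) * b ^ (p + 2*(k-p-q))))"
    proof (rule sum.cong[OF refl])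
      fix q assume q: "q \<in> {..k-p}"
      have "(-2*t*a*b)^p = (-2*t)^p * a^p * b^p" by (simp only: mult_minus_left[symmetric] power_mult_distrib)
      moreover have "a ^ (p + 2*q) = a^p * (a\<^sup>2)^q" by (simp add: power_add power_mult)
      moreover have "b ^ (p + 2*(k-p-q)) = b^p * (b\<^sup>2)^(k-p-q)" by (simp add: power_add power_mult)
      ultimately show "real (k choose p) * (-2*t*a*b)^p * (real ((k-p) choose q) * (a\<^sup>2)^q * (b\<^sup>2)^(k-p-q)) =
        real (k choose p) * real ((k-p) choose q) * (-2*t)^p * (a ^ (p + 2*q) * b ^ (p + 2*(k-p-q)))"
        by (simp only: mult_ac)
    qed
    finally show "real (k choose p) * (-2*t*a*b)^p * (a\<^sup>2 + b\<^sup>2)^(k-p) =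
      (\<Sum>q\<le>k-p. real (k choose p) * real ((k-p) choose q) * (-2*t)^p * (a ^ (p + 2*q) * b ^ (p + 2*(k-p-q))))" .
  qed
  finally show ?thesis .
qed

lemma Qf_nonneg: "\<bar>t\<bar> \<le> 1 \<Longrightarrow> Qf t a b \<ge> 0"
proof -
  assume t: "\<bar>t\<bar> \<le> 1"
  have "\<bar>2 * t * a * b\<bar> \<le> 2 * \<bar>a * b\<bar>"
    using t by (simp add: abs_mult mult_right_le_one_le mult_le_cancel_right1 mult_left_le_one_le)
  moreover have "2 * \<bar>a * b\<bar> \<le> a\<^sup>2 + b\<^sup>2"
    using sum_squares_bound[of "\<bar>a\<bar>" "\<bar>b\<bar>"] by (simp add: abs_mult power2_eq_square)
  ultimately show ?thesis unfolding Qf_def by linarith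
qed

lemma Qf_le: "\<bar>t\<bar> \<le> 1 \<Longrightarrow> Qf t a b \<le> 2 * Qf 0 a b"
proof -
  assume t: "\<bar>t\<bar> \<le> 1"
  have "\<bar>2 * t * a * b\<bar> \<le> 2 * \<bar>a * b\<bar>"
    using t by (simp add: abs_mult mult_right_le_one_le mult_le_cancel_right1 mult_left_le_one_le)
  moreover have "2 * \<bar>a * b\<bar> \<le> a\<^sup>2 + b\<^sup>2"
    using sum_squares_bound[of "\<bar>a\<bar>" "\<bar>b\<bar>"] by (simp add: abs_mult power2_eq_square)
  moreover have "- (2 * t * a * b) \<le> \<bar>2 * t * a * b\<bar>" by (rule abs_ge_minus_self)
  ultimately have "- (2 * t * a * b) \<le> a\<^sup>2 + b\<^sup>2" by linarith
  then show ?thesis unfolding Qf_def by simp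
qed

lemma chi_nonneg: "d \<ge> 1 \<Longrightarrow> chi_density d x \<ge> 0"
  by (simp add: chi_density_def)

lemma (in prob_space) moment_M:
  assumes d: "d \<ge> 2" and X: "distributed M lborel X (\<lambda>t. ennreal (chi_density d t))"
  shows "integrable M (\<lambda>\<omega>. X \<omega> ^ s)" and "integral\<^sup>L M (\<lambda>\<omega>. X \<omega> ^ s) = mom d s"
proof -
  have h: "has_bochner_integral lborel (\<lambda>a. chi_density d a * a ^ s) (mom d s)"
    unfolding mom_def by (rule chi_moment[OF d])
  have nn: "\<And>x. x \<in> space lborel \<Longrightarrow> 0 \<le> chi_density d x" using d by (simp add: chi_nonneg)
  have g: "(\<lambda>x::real. x ^ s) \<in> borel_measurable lborel" by measurable
  show "integrable M (\<lambda>\<omega>. X \<omega> ^ s)"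
    using distributed_integrable[OF X g nn] h by (simp add: has_bochner_integral_iff)
  show "integral\<^sup>L M (\<lambda>\<omega>. X \<omega> ^ s) = mom d s"
    using distributed_integral[OF X g nn] h by (simp add: has_bochner_integral_iff)
qed

lemma (in prob_space) mixed_moment:
  assumes d: "d \<ge> 2" and A: "distributed M lborel A (\<lambda>t. ennreal (chi_density d t))"
    and B: "distributed M lborel B (\<lambda>t. ennreal (chi_density d t))"
    and ind: "indep_var borel A borel B"
  shows "integrable M (\<lambda>\<omega>. A \<omega> ^ s * B \<omega> ^ r)"
    and "integral\<^sup>L M (\<lambda>\<omega>. A \<omega> ^ s * B \<omega> ^ r) = mom d s * mom d r"
proof -
  have ind2: "indep_var borel ((\<lambda>x. x ^ s) \<circ> A) borel ((\<lambda>x. x ^ r) \<circ> B)"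
    by (rule indep_var_compose[OF ind]) measurable
  then have ind3: "indep_var borel (\<lambda>\<omega>. A \<omega> ^ s) borel (\<lambda>\<omega>. B \<omega> ^ r)"
    by (simp add: comp_def)
  show "integrable M (\<lambda>\<omega>. A \<omega> ^ s * B \<omega> ^ r)"
    by (rule indep_var_integrable[OF ind3 moment_M(1)[OF d A] moment_M(1)[OF d B]])
  show "integral\<^sup>L M (\<lambda>\<omega>. A \<omega> ^ s * B \<omega> ^ r) = mom d s * mom d r"
    using indep_var_lebesgue_integral[OF ind3 moment_M(1)[OF d A] moment_M(1)[OF d B]]
    by (simp add: moment_M(2)[OF d A] moment_M(2)[OF d B])
qed

lemma (in prob_space) Q_moment:
  assumes d: "d \<ge> 2" and A: "distributed M lborel A (\<lambda>t. ennreal (chi_density d t))"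
    and B: "distributed M lborel B (\<lambda>t. ennreal (chi_density d t))"
    and ind: "indep_var borel A borel B"
  shows "integrable M (\<lambda>\<omega>. Qf t (A \<omega>) (B \<omega>) ^ k)"
    and "integral\<^sup>L M (\<lambda>\<omega>. Qf t (A \<omega>) (B \<omega>) ^ k) =
      (\<Sum>p\<le>k. \<Sum>q\<le>k-p. real (k choose p) * real ((k-p) choose q) * (-2*t)^p
      * (mom d (p + 2*q) * mom d (p + 2*(k-p-q))))"
proof -
  note mm = mixed_moment[OF d A B ind]
  show "integrable M (\<lambda>\<omega>. Qf t (A \<omega>) (B \<omega>) ^ k)"
    unfolding poly_expand by (simp add: mm(1))
  show "integral\<^sup>L M (\<lambda>\<omega>. Qf t (A \<omega>) (B \<omega>) ^ k) =
      (\<Sum>p\<le>k. \<Sum>q\<le>k-p. real (k choose p) * real ((k-p) choose q) * (-2*t)^p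
      * (mom d (p + 2*q) * mom d (p + 2*(k-p-q))))"
    unfolding poly_expand
    by (simp add: integral_sum integrable_sum integrable_mult_right mm)
qed

definition Gk :: "nat \<Rightarrow> nat \<Rightarrow> nat \<Rightarrow> real" where
  "Gk d k p = 2 ^ k * Gamma ((real d + real p) / 2) ^ 2 * Gamma (real d + real k)
      / (Gamma (real d + real p) * Gamma (real d / 2) ^ 2)"

lemma mom_prod:
  assumes "q \<le> n"
  shows "mom d (p + 2*q) * mom d (p + 2*(n-q)) =
    2 ^ (p + n) / Gamma (real d / 2) ^ 2 *
    (Gamma ((real d + real p) / 2 + real q) * Gamma ((real d + real p) / 2 + real (n - q)))"
proof -
  have e1: "(real d + real (p + 2*q)) / 2 = (real d + real p) / 2 + real q" by (simp add: field_simps)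
  have e2: "(real d + real (p + 2*(n-q))) / 2 = (real d + real p) / 2 + real (n - q)"
    by (simp add: field_simps)
  have e3: "sqrt 2 ^ (p + 2*q) * sqrt 2 ^ (p + 2*(n-q)) = (2::real) ^ (p + n)"
  proof -
    have "sqrt 2 ^ (p + 2*q) * sqrt 2 ^ (p + 2*(n-q)) = sqrt (2::real) ^ (2 * (p + n))"
      using assms by (simp add: power_add[symmetric])
    also have "\<dots> = 2 ^ (p + n)" unfolding power_mult by simp
    finally show ?thesis .
  qed
  have gen: "x1 * g1 / G * (x2 * g2 / G) = (x1 * x2) / G ^ 2 * (g1 * g2)" for x1 x2 g1 g2 G :: real
    by (simp add: power2_eq_square)
  show ?thesis unfolding mom_def e1 e2 gen e3 ..
qed

lemma EQ_closed:
  assumes d: "d \<ge> 2"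
  shows "(\<Sum>p\<le>k. \<Sum>q\<le>k-p. real (k choose p) * real ((k-p) choose q) * (-2*t)^p
      * (mom d (p + 2*q) * mom d (p + 2*(k-p-q)))) =
    (\<Sum>p\<le>k. real (k choose p) * (-2*t)^p * Gk d k p)"
proof (rule sum.cong[OF refl])
  fix p assume p: "p \<in> {..k}"
  define n where "n = k - p"
  define \<alpha> where "\<alpha> = (real d + real p) / 2"
  have apos: "\<alpha> > 0" using d by (simp add: \<alpha>_def)
  have kpq: "k - p - q = n - q" for q by (simp add: n_def)
  have "(\<Sum>q\<le>k-p. real (k choose p) * real ((k-p) choose q) * (-2*t)^p
      * (mom d (p + 2*q) * mom d (p + 2*(k-p-q))))
     = real (k choose p) * (-2*t)^p * (2 ^ (p + n) / Gamma (real d / 2) ^ 2) *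
       (\<Sum>q\<le>n. real (n choose q) * Gamma (\<alpha> + real q) * Gamma (\<alpha> + real (n - q)))"
    unfolding sum_distrib_left n_def[symmetric] kpq
  proof (rule sum.cong[OF refl])
    fix q assume "q \<in> {..n}"
    then have "q \<le> n" by simp
    then show "real (k choose p) * real (n choose q) * (- 2 * t) ^ p * (mom d (p + 2 * q) * mom d (p + 2 * (n - q))) =
      real (k choose p) * (- 2 * t) ^ p * (2 ^ (p + n) / Gamma (real d / 2) ^ 2) *
       (real (n choose q) * Gamma (\<alpha> + real q) * Gamma (\<alpha> + real (n - q)))"
      unfolding mom_prod[OF \<open>q \<le> n\<close>] \<alpha>_def by (simp only: mult_ac)
  qed
  also have "\<dots> = real (k choose p) * (-2*t)^p * (2 ^ (p + n) / Gamma (real d / 2) ^ 2) *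
       (Gamma \<alpha> ^ 2 * Gamma (2*\<alpha> + real n) / Gamma (2*\<alpha>))"
    by (simp only: vand_gamma[OF apos])
  also have "\<dots> = real (k choose p) * (-2*t)^p * Gk d k p"
  proof -
    have pn: "p + n = k" using p by (simp add: n_def)
    have a2: "2*\<alpha> = real d + real p" by (simp add: \<alpha>_def)
    have a3: "2*\<alpha> + real n = real d + real k" using p by (simp add: \<alpha>_def n_def of_nat_diff field_simps)
    show ?thesis unfolding pn unfolding a3 unfolding a2 unfolding Gk_def \<alpha>_def by (simp add: field_simps)
  qed
  finally show "(\<Sum>q\<le>k-p. real (k choose p) * real ((k-p) choose q) * (-2*t)^p
      * (mom d (p + 2*q) * mom d (p + 2*(k-p-q)))) = real (k choose p) * (-2*t)^p * Gk d k p" .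
qed

definition EQv :: "nat \<Rightarrow> real \<Rightarrow> nat \<Rightarrow> real" where
  "EQv d t k = (\<Sum>p\<le>k. real (k choose p) * (-2*t)^p * Gk d k p)"

lemma EQv_0:
  assumes d: "d \<ge> 2"
  shows "EQv d 0 k = 2 ^ k * Gamma (real d + real k) / Gamma (real d)"
proof -
  have "EQv d 0 k = Gk d k 0"
    unfolding EQv_def by (simp add: power_0_left mult_delta_right mult_delta_left)
  also have "\<dots> = 2 ^ k * Gamma (real d + real k) / Gamma (real d)"
  proof -
    have "Gamma (real d / 2) > 0" using d by simp
    then show ?thesis by (simp add: Gk_def)
  qed
  finally show ?thesis .
qed

lemma (in prob_space) kernel_expectation:
  assumes d: "d \<ge> 2" and A: "distributed M lborel A (\<lambda>t. ennreal (chi_density d t))"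
    and B: "distributed M lborel B (\<lambda>t. ennreal (chi_density d t))"
    and ind: "indep_var borel A borel B" and t: "\<bar>t\<bar> \<le> 1"
  shows "integrable M (\<lambda>\<omega>. \<Sum>k. cK d v k * Qf t (A \<omega>) (B \<omega>) ^ k)"
    and "integral\<^sup>L M (\<lambda>\<omega>. \<Sum>k. cK d v k * Qf t (A \<omega>) (B \<omega>) ^ k) = (\<Sum>k. cK d v k * EQv d t k)"
    and "summable (\<lambda>k. cK d v k * EQv d t k)"
proof -
  define f where "f k \<omega> = cK d v k * Qf t (A \<omega>) (B \<omega>) ^ k" for k \<omega>
  have d1: "d \<ge> 1" using d by simp
  have EQ: "integral\<^sup>L M (\<lambda>\<omega>. Qf s (A \<omega>) (B \<omega>) ^ k) = EQv d s k" for s k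
    unfolding Q_moment(2)[OF d A B ind] EQ_closed[OF d] EQv_def ..
  have intQ: "integrable M (\<lambda>\<omega>. Qf s (A \<omega>) (B \<omega>) ^ k)" for s k
    by (rule Q_moment(1)[OF d A B ind])
  have fint: "integrable M (f k)" for k
    unfolding f_def by (intro integrable_mult_right intQ)
  have fnn: "f k \<omega> \<ge> 0" for k \<omega>
    unfolding f_def using cK_nonneg[OF d1] Qf_nonneg[OF t] by simp
  have fI: "integral\<^sup>L M (f k) = cK d v k * EQv d t k" for k
    unfolding f_def by (simp add: EQ)
  have fnI: "(\<integral>\<omega>. norm (f k \<omega>) \<partial>M) = cK d v k * EQv d t k" for k
    using fnn fI by simp
  have bound: "norm (cK d v k * EQv d t k) \<le> cK d v k * (4 ^ k * Gamma (real d + real k) / Gamma (real d))" for k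
  proof -
    have nn: "EQv d t k \<ge> 0"
      unfolding EQ[symmetric] using Qf_nonneg[OF t] by simp
    have "EQv d t k \<le> integral\<^sup>L M (\<lambda>\<omega>. 2 ^ k * Qf 0 (A \<omega>) (B \<omega>) ^ k)"
      unfolding EQ[symmetric]
    proof (rule integral_mono)
      show "integrable M (\<lambda>\<omega>. Qf t (A \<omega>) (B \<omega>) ^ k)" by (rule intQ)
      show "integrable M (\<lambda>\<omega>. 2 ^ k * Qf 0 (A \<omega>) (B \<omega>) ^ k)" by (intro integrable_mult_right intQ)
      fix \<omega>
      have "Qf t (A \<omega>) (B \<omega>) ^ k \<le> (2 * Qf 0 (A \<omega>) (B \<omega>)) ^ k"
        by (rule power_mono[OF Qf_le[OF t] Qf_nonneg[OF t]])
      then show "Qf t (A \<omega>) (B \<omega>) ^ k \<le> 2 ^ k * Qf 0 (A \<omega>) (B \<omega>) ^ k"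
        by (simp add: power_mult_distrib)
    qed
    also have "\<dots> = 2 ^ k * EQv d 0 k" by (simp add: EQ)
    also have "\<dots> = 4 ^ k * Gamma (real d + real k) / Gamma (real d)"
      unfolding EQv_0[OF d] by (simp add: power_mult_distrib[symmetric])
    finally have "EQv d t k \<le> 4 ^ k * Gamma (real d + real k) / Gamma (real d)" .
    then have "cK d v k * EQv d t k \<le> cK d v k * (4 ^ k * Gamma (real d + real k) / Gamma (real d))"
      by (rule mult_left_mono) (rule cK_nonneg[OF d1])
    then show ?thesis using nn cK_nonneg[OF d1, of v k] by simp
  qed
  have sumI: "summable (\<lambda>k. \<integral>\<omega>. norm (f k \<omega>) \<partial>M)"
    unfolding fnI
    by (rule summable_comparison_test'[OF summable_bound_terms[OF d]]) (rule bound)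
  have AEs: "AE \<omega> in M. summable (\<lambda>k. norm (f k \<omega>))"
  proof (rule AE_I2)
    fix \<omega>
    have "summable (\<lambda>k. cK d v k * Qf t (A \<omega>) (B \<omega>) ^ k)"
      by (rule summable_kernel_terms[OF d Qf_nonneg[OF t]])
    then show "summable (\<lambda>k. norm (f k \<omega>))" using fnn by (simp add: f_def)
  qed
  show "integrable M (\<lambda>\<omega>. \<Sum>k. cK d v k * Qf t (A \<omega>) (B \<omega>) ^ k)"
    using integrable_suminf[OF fint AEs sumI] by (simp add: f_def)
  show "integral\<^sup>L M (\<lambda>\<omega>. \<Sum>k. cK d v k * Qf t (A \<omega>) (B \<omega>) ^ k) = (\<Sum>k. cK d v k * EQv d t k)"
    using integral_suminf[OF fint AEs sumI] fI by (simp add: f_def EQ)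
  show "summable (\<lambda>k. cK d v k * EQv d t k)"
    using summable_integral[OF fint AEs sumI] fI by simp
qed

lemma term_p:
  assumes d: "d \<ge> 2" and p: "p \<le> k"
  shows "real (k choose p) * (-2*t)^p * Gk d k p =
    fact k * 2 ^ k * sqrt pi * Gamma (real d + real k) / (Gamma (real d / 2) ^ 2 * 2 ^ (d - 1)) *
    ((-t)^p * Gamma ((real d + real p) / 2) / Gamma ((real d + real p + 1) / 2) / (fact (k - p) * fact p))"
proof -
  define a where "a = Gamma ((real d + real p) / 2)"
  define b where "b = Gamma ((real d + real p + 1) / 2)"
  define g where "g = Gamma (real d / 2)"
  have apos: "a > 0" using d by (simp add: a_def)
  have bpos: "b > 0" using d by (simp add: b_def)
  have gpos: "g > 0" using d by (simp add: g_def)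
  have dup: "a * b * 2 ^ (d + p - 1) = sqrt pi * Gamma (real d + real p)"
    using dup_nat[of "d + p"] d by (simp add: a_def b_def)
  have p2: "(2::real) ^ (d + p - 1) = 2 ^ (d - 1) * 2 ^ p"
    using d by (simp add: power_add[symmetric])
  have G: "Gamma (real d + real p) = a * b * 2 ^ (d - 1) * 2 ^ p / sqrt pi"
    using dup unfolding p2 by (simp add: field_simps)
  have C: "real (k choose p) = fact k / (fact p * fact (k - p))" by (rule binomial_fact[OF p])
  have t2: "(-2*t)^p = 2^p * (-t)^p" by (simp add: power_mult_distrib[symmetric])
  have "real (k choose p) * (-2*t)^p * Gk d k p =
     fact k / (fact p * fact (k - p)) * (2^p * (-t)^p) *
       (2 ^ k * a ^ 2 * Gamma (real d + real k) / ((a * b * 2 ^ (d - 1) * 2 ^ p / sqrt pi) * g ^ 2))"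
    unfolding C t2 Gk_def G a_def[symmetric] g_def[symmetric] ..
  also have "\<dots> = fact k * 2 ^ k * sqrt pi * Gamma (real d + real k) / (g ^ 2 * 2 ^ (d - 1)) *
    ((-t)^p * a / b / (fact (k - p) * fact p))"
    using apos bpos gpos by (simp add: field_simps power2_eq_square)
  finally show ?thesis unfolding a_def b_def g_def .
qed

lemma series_transform:
  fixes X Y :: "nat \<Rightarrow> real"
  assumes "summable X" "\<And>k. a * X k = c * Y k" "c \<noteq> 0"
  shows "a * (\<Sum>k. X k) = c * (\<Sum>k. Y k)"
proof -
  have Y: "Y = (\<lambda>k. (a / c) * X k)" using assms(2,3) by (auto simp: fun_eq_iff field_simps)
  have sY: "summable Y" unfolding Y by (rule summable_mult[OF assms(1)])
  have "a * (\<Sum>k. X k) = (\<Sum>k. a * X k)" by (rule suminf_mult[OF assms(1), symmetric])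
  also have "\<dots> = (\<Sum>k. c * Y k)" using assms(2) by simp
  also have "\<dots> = c * (\<Sum>k. Y k)" by (rule suminf_mult[OF sY])
  finally show ?thesis .
qed

lemma orf_series:
  assumes d: "d \<ge> 2" and s: "summable (\<lambda>k. cK d v k * EQv d 0 k)"
  shows "Gamma (real d / 2) * (\<Sum>k. cK d v k * EQv d 0 k) =
    Gamma (real d / 2) / Gamma (real d) *
      (\<Sum>k. v ^ (2*k) / (2 ^ k * fact k) * Gamma (real k + real d) / Gamma (real k + real d / 2))"
proof -
  have gd: "Gamma (real d) > 0" using d by simp
  have gh: "Gamma (real d / 2) > 0" using d by simp
  have "Gamma (real d / 2) * (\<Sum>k. cK d v k * EQv d 0 k) = (Gamma (real d / 2) / Gamma (real d)) *
      (\<Sum>k. v ^ (2*k) / (2 ^ k * fact k) * Gamma (real k + real d) / Gamma (real k + real d / 2))"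
  proof (rule series_transform[OF s])
    fix k
    have gk: "Gamma (real k + real d / 2) > 0" using d by simp
    show "Gamma (real d / 2) * (cK d v k * EQv d 0 k) = Gamma (real d / 2) / Gamma (real d) *
      (v ^ (2*k) / (2 ^ k * fact k) * Gamma (real k + real d) / Gamma (real k + real d / 2))"
      unfolding EQv_0[OF d] cK_def using gd gh gk
      by (simp add: field_simps power_mult_distrib power_add add.commute mult_2 power_mult power2_eq_square)
  next
    show "Gamma (real d / 2) / Gamma (real d) \<noteq> 0" using gd gh by simp
  qed
  then show ?thesis .
qed

lemma sim_series:
  assumes d: "d \<ge> 2" and s: "summable (\<lambda>k. cK d v k * EQv d t k)"
  shows "Gamma (real d / 2) * (\<Sum>k. cK d v k * EQv d t k) =
    sqrt pi / (Gamma (real d / 2) * 2 ^ (d - 1)) *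
     (\<Sum>k. Gamma (real k + real d) / Gamma (real k + real d / 2) * v ^ (2*k) / 2 ^ k
        * (\<Sum>p\<le>k. (-t) ^ p * Gamma ((real d + real p) / 2) / Gamma ((real d + real p + 1) / 2)
            / (fact (k - p) * fact p)))"
proof (rule series_transform[OF s])
  fix k
  define Z where "Z = (\<Sum>p\<le>k. (-t) ^ p * Gamma ((real d + real p) / 2) / Gamma ((real d + real p + 1) / 2)
            / (fact (k - p) * fact p))"
  have gh: "Gamma (real d / 2) > 0" using d by simp
  have gk: "Gamma (real k + real d / 2) > 0" using d by simp
  have "EQv d t k = fact k * 2 ^ k * sqrt pi * Gamma (real d + real k) / (Gamma (real d / 2) ^ 2 * 2 ^ (d - 1)) * Z"
    unfolding EQv_def Z_def sum_distrib_left by (rule sum.cong[OF refl]) (rule term_p[OF d], simp)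
  then show "Gamma (real d / 2) * (cK d v k * EQv d t k) =
    sqrt pi / (Gamma (real d / 2) * 2 ^ (d - 1)) *
     (Gamma (real k + real d) / Gamma (real k + real d / 2) * v ^ (2*k) / 2 ^ k * Z)"
    unfolding cK_def using gh gk
    by (simp add: field_simps power_mult_distrib power_add add.commute mult_2 power_mult power2_eq_square)
next
  have "Gamma (real d / 2) > 0" using d by simp
  then show "sqrt pi / (Gamma (real d / 2) * 2 ^ (d - 1)) \<noteq> 0" by simp
qed

lemma (in prob_space) indep_pair:
  assumes ind: "indep_vars (\<lambda>_. borel) W UNIV" and pq: "p \<noteq> q"
  shows "indep_var borel (W p) borel (W q)"
proof -
  have "indep_var (PiM {p} (\<lambda>_. borel)) (\<lambda>\<omega>. restrict (\<lambda>i. W i \<omega>) {p})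
                  (PiM {q} (\<lambda>_. borel)) (\<lambda>\<omega>. restrict (\<lambda>i. W i \<omega>) {q})"
    by (rule indep_var_restrict[OF ind]) (use pq in auto)
  then have "indep_var borel ((\<lambda>f. f p) \<circ> (\<lambda>\<omega>. restrict (\<lambda>i. W i \<omega>) {p}))
                       borel ((\<lambda>f. f q) \<circ> (\<lambda>\<omega>. restrict (\<lambda>i. W i \<omega>) {q}))"
    by (rule indep_var_compose) (auto intro: measurable_component_singleton)
  moreover have "((\<lambda>f. f p) \<circ> (\<lambda>\<omega>. restrict (\<lambda>i. W i \<omega>) {p})) = W p" by (auto simp: fun_eq_iff)
  moreover have "((\<lambda>f. f q) \<circ> (\<lambda>\<omega>. restrict (\<lambda>i. W i \<omega>) {q})) = W q" by (auto simp: fun_eq_iff)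
  ultimately show ?thesis by simp
qed

lemma AE_orth:
  fixes R :: "'a \<Rightarrow> real^'n^'n"
  assumes M: "prob_space M" and R: "R \<in> borel_measurable M" and H: "orth_haar (distr M borel R)"
  shows "AE \<omega> in M. orthogonal_matrix (R \<omega>)"
proof -
  define S where "S = {X :: real^'n^'n. orthogonal_matrix X}"
  have PN: "prob_space (distr M borel R)" and E1: "emeasure (distr M borel R) S = 1"
    using H by (auto simp: orth_haar_def S_def)
  have SN: "S \<in> sets (distr M borel R)"
  proof (rule ccontr)
    assume "S \<notin> sets (distr M borel R)"
    then have "emeasure (distr M borel R) S = 0" by (rule emeasure_notin_sets)
    with E1 show False by simp
  qed
  have SB: "S \<in> sets borel" using SN by simp
  have "AE x in distr M borel R. x \<in> S"
    using prob_space.AE_in_set_eq_1[OF PN SN] E1 by (simp add: measure_def)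
  then have "AE \<omega> in M. R \<omega> \<in> S"
    by (subst (asm) AE_distr_iff[OF R]) (use SB in simp_all)
  then show ?thesis by (simp add: S_def)
qed

lemma rf_kernel_eq: "rf_kernel d v w = (\<Sum>k. cK d v k * (w\<^sup>2) ^ k)"
  unfolding rf_kernel_def cK_def by (simp add: power_mult)

lemma rf_kernel_meas[measurable]: "rf_kernel d v \<in> borel_measurable borel"
  unfolding rf_kernel_def[abs_def] by measurable

lemma nth_meas: "(\<lambda>X::real^'n^'n. X $ p) \<in> borel_measurable borel"
  by (intro borel_measurable_continuous_onI continuous_intros)

lemma smult_row: "(S ** X) $ p = (\<Sum>l\<in>UNIV. (S $ p $ l) *\<^sub>R (X $ l))" for S X :: "real^'n^'n"
  by (simp add: vec_eq_iff matrix_matrix_mult_def sum_component)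

lemma smult_meas: "(\<lambda>X::real^'n^'n. ((S::real^'n^'n) ** X) $ p) \<in> borel_measurable borel"
proof -
  have "(\<lambda>X::real^'n^'n. (S ** X) $ p) = (\<lambda>X. \<Sum>l\<in>UNIV. (S $ p $ l) *\<^sub>R (X $ l))"
    by (simp add: smult_row)
  also have "\<dots> \<in> borel_measurable borel"
    by (intro borel_measurable_continuous_onI continuous_intros)
  finally show ?thesis .
qed

lemma pair_int:
  fixes M :: "'a measure" and W :: "'n::finite \<Rightarrow> 'a \<Rightarrow> real" and R :: "'a \<Rightarrow> real^'n^'n"
    and e :: "nat \<Rightarrow> 'n"
  assumes M: "prob_space M" and d2: "CARD('n) \<ge> 2"
    and dist: "\<And>k. distributed M lborel (W k) (\<lambda>t. ennreal (chi_density CARD('n) t))"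
    and Rm: "R \<in> borel_measurable M" and H: "orth_haar (distr M borel R)"
    and ind: "prob_space.indep_vars M (\<lambda>_. borel) W UNIV"
    and pq: "p \<noteq> q"
  shows "integral\<^sup>L M (\<lambda>\<omega>. rf_kernel CARD('n) v (norm (W p \<omega> *\<^sub>R (R \<omega> $ p) + W q \<omega> *\<^sub>R (R \<omega> $ q))))
           = (\<Sum>k. cK CARD('n) v k * EQv CARD('n) 0 k)"
    and "summable (\<lambda>k. cK CARD('n) v k * EQv CARD('n) 0 k)"
    and "integral\<^sup>L M (\<lambda>\<omega>. rf_kernel CARD('n) v (norm (W p \<omega> *\<^sub>R ((simplex_matrix e ** R \<omega>) $ p)
                                              + W q \<omega> *\<^sub>R ((simplex_matrix e ** R \<omega>) $ q))))
           = (\<Sum>k. cK CARD('n) v k * EQv CARD('n) (1 / (real CARD('n) - 1)) k)"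
    and "summable (\<lambda>k. cK CARD('n) v k * EQv CARD('n) (1 / (real CARD('n) - 1)) k)"
proof -
  interpret prob_space M by (rule M)
  define d where "d = CARD('n)"
  define t where "t = 1 / (real CARD('n) - 1)"
  have t1: "\<bar>t\<bar> \<le> 1" using d2 by (simp add: t_def)
  have t0: "\<bar>0::real\<bar> \<le> 1" by simp
  have indAB: "indep_var borel (W p) borel (W q)" by (rule indep_pair[OF ind pq])
  note KE0 = kernel_expectation[OF d2 dist dist indAB t0, of v]
  note KE1 = kernel_expectation[OF d2 dist dist indAB t1, of v]
  have AEo: "AE \<omega> in M. orthogonal_matrix (R \<omega>)" by (rule AE_orth[OF M Rm H])
  have Wm[measurable]: "W k \<in> borel_measurable M" for k
    using distributed_measurable[OF dist[of k]] by simp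
  have Rnth[measurable]: "(\<lambda>\<omega>. R \<omega> $ k) \<in> borel_measurable M" for k
    using measurable_comp[OF Rm nth_meas[of k]] by (simp add: comp_def)
  have Snth[measurable]: "(\<lambda>\<omega>. (simplex_matrix e ** R \<omega>) $ k) \<in> borel_measurable M" for k
    using measurable_comp[OF Rm smult_meas[of "simplex_matrix e" k]] by (simp add: comp_def)
  show "summable (\<lambda>k. cK CARD('n) v k * EQv CARD('n) 0 k)" by (rule KE0(3))
  show "summable (\<lambda>k. cK CARD('n) v k * EQv CARD('n) (1 / (real CARD('n) - 1)) k)"
    using KE1(3) by (simp add: t_def)
  show "integral\<^sup>L M (\<lambda>\<omega>. rf_kernel CARD('n) v (norm (W p \<omega> *\<^sub>R (R \<omega> $ p) + W q \<omega> *\<^sub>R (R \<omega> $ q))))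
           = (\<Sum>k. cK CARD('n) v k * EQv CARD('n) 0 k)"
  proof -
    have "integral\<^sup>L M (\<lambda>\<omega>. rf_kernel CARD('n) v (norm (W p \<omega> *\<^sub>R (R \<omega> $ p) + W q \<omega> *\<^sub>R (R \<omega> $ q))))
        = integral\<^sup>L M (\<lambda>\<omega>. \<Sum>k. cK CARD('n) v k * Qf 0 (W p \<omega>) (W q \<omega>) ^ k)"
    proof (rule integral_cong_AE)
      show "(\<lambda>\<omega>. rf_kernel CARD('n) v (norm (W p \<omega> *\<^sub>R (R \<omega> $ p) + W q \<omega> *\<^sub>R (R \<omega> $ q)))) \<in> borel_measurable M"
        by measurable
      show "(\<lambda>\<omega>. \<Sum>k. cK CARD('n) v k * Qf 0 (W p \<omega>) (W q \<omega>) ^ k) \<in> borel_measurable M"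
        using KE0(1) by (rule borel_measurable_integrable)
      show "AE \<omega> in M. rf_kernel CARD('n) v (norm (W p \<omega> *\<^sub>R (R \<omega> $ p) + W q \<omega> *\<^sub>R (R \<omega> $ q)))
          = (\<Sum>k. cK CARD('n) v k * Qf 0 (W p \<omega>) (W q \<omega>) ^ k)"
        using AEo
      proof eventually_elim
        case (elim \<omega>)
        show ?case unfolding rf_kernel_eq orf_sum_norm[OF elim pq] by (simp add: Qf_def)
      qed
    qed
    also have "\<dots> = (\<Sum>k. cK CARD('n) v k * EQv CARD('n) 0 k)" by (rule KE0(2))
    finally show ?thesis .
  qed
  show "integral\<^sup>L M (\<lambda>\<omega>. rf_kernel CARD('n) v (norm (W p \<omega> *\<^sub>R ((simplex_matrix e ** R \<omega>) $ p)
                                              + W q \<omega> *\<^sub>R ((simplex_matrix e ** R \<omega>) $ q))))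
           = (\<Sum>k. cK CARD('n) v k * EQv CARD('n) (1 / (real CARD('n) - 1)) k)"
  proof -
    have "integral\<^sup>L M (\<lambda>\<omega>. rf_kernel CARD('n) v (norm (W p \<omega> *\<^sub>R ((simplex_matrix e ** R \<omega>) $ p)
                                              + W q \<omega> *\<^sub>R ((simplex_matrix e ** R \<omega>) $ q))))
        = integral\<^sup>L M (\<lambda>\<omega>. \<Sum>k. cK CARD('n) v k * Qf t (W p \<omega>) (W q \<omega>) ^ k)"
    proof (rule integral_cong_AE)
      show "(\<lambda>\<omega>. rf_kernel CARD('n) v (norm (W p \<omega> *\<^sub>R ((simplex_matrix e ** R \<omega>) $ p)
                                              + W q \<omega> *\<^sub>R ((simplex_matrix e ** R \<omega>) $ q)))) \<in> borel_measurable M"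
        by measurable
      show "(\<lambda>\<omega>. \<Sum>k. cK CARD('n) v k * Qf t (W p \<omega>) (W q \<omega>) ^ k) \<in> borel_measurable M"
        using KE1(1) by (rule borel_measurable_integrable)
      show "AE \<omega> in M. rf_kernel CARD('n) v (norm (W p \<omega> *\<^sub>R ((simplex_matrix e ** R \<omega>) $ p)
                                              + W q \<omega> *\<^sub>R ((simplex_matrix e ** R \<omega>) $ q)))
          = (\<Sum>k. cK CARD('n) v k * Qf t (W p \<omega>) (W q \<omega>) ^ k)"
        using AEo
      proof eventually_elim
        case (elim \<omega>)
        show ?case unfolding rf_kernel_eq sim_sum_norm[OF elim pq d2] by (simp add: Qf_def t_def)
      qed
    qed
    also have "\<dots> = (\<Sum>k. cK CARD('n) v k * EQv CARD('n) t k)" by (rule KE1(2))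
    finally show ?thesis by (simp add: t_def)
  qed
qed

theorem theorem4p3:
  fixes M :: "'a measure"
    and W :: "'n::finite \<Rightarrow> 'a \<Rightarrow> real"
    and R :: "'a \<Rightarrow> real^'n^'n"
    and e :: "nat \<Rightarrow> 'n"
    and x y :: "real^'n"
    and m :: nat
  assumes "prob_space M"
    and "CARD('n) \<ge> 2" and "2 \<le> m" and "m \<le> CARD('n)"
    and "bij_betw e {..<CARD('n)} UNIV"
    and "\<And>k. distributed M lborel (W k) (\<lambda>t. ennreal (chi_density CARD('n) t))"
    and "R \<in> borel_measurable M" and "orth_haar (distr M borel R)"
    and "prob_space.indep_vars M (\<lambda>_. borel) W UNIV"
    and "\<And>A B. A \<in> sets (borel :: (real^'n) measure) \<Longrightarrow> B \<in> sets (borel :: (real^'n^'n) measure) \<Longrightarrow>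
           measure M {\<omega> \<in> space M. (\<chi> k. W k \<omega>) \<in> A \<and> R \<omega> \<in> B}
             = measure M {\<omega> \<in> space M. (\<chi> k. W k \<omega>) \<in> A} * measure M {\<omega> \<in> space M. R \<omega> \<in> B}"
  shows "(rf_conformity M CARD('n) m (norm (x + y)) (orf_vecs W R e)
           = Gamma (real CARD('n) / 2) / Gamma (real CARD('n)) *
             (\<Sum>k. norm (x + y) ^ (2*k) / (2 ^ k * fact k)
                   * Gamma (real k + real CARD('n)) / Gamma (real k + real CARD('n) / 2)))
       \<and> (rf_conformity M CARD('n) m (norm (x + y)) (simrf_vecs W R e)
           = sqrt pi / (Gamma (real CARD('n) / 2) * 2 ^ (CARD('n) - 1)) *
             (\<Sum>k. Gamma (real k + real CARD('n)) / Gamma (real k + real CARD('n) / 2)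
                   * norm (x + y) ^ (2*k) / 2 ^ k
                   * (\<Sum>p\<le>k. (- 1 / (real CARD('n) - 1)) ^ p
                        * Gamma ((real CARD('n) + real p) / 2)
                        / Gamma ((real CARD('n) + real p + 1) / 2)
                        / (fact (k - p) * fact p))))"
proof -
  define d where "d = CARD('n)"
  have d2: "CARD('n) \<ge> 2" by (rule assms(2))
  have inj: "inj_on e {..<CARD('n)}" using assms(5) by (rule bij_betw_imp_inj_on)
  have neq: "e i \<noteq> e j" if "i < m" "j < m" "i \<noteq> j" for i j
    using inj that assms(4) unfolding inj_on_def by (metis lessThan_iff order_less_le_trans)
  note PI = pair_int[OF assms(1) d2 assms(6) assms(7) assms(8) assms(9)]
  have m0: "real m * (real m - 1) \<noteq> 0" using assms(3) by simp
  have sumconst: "(\<Sum>i<m. \<Sum>j\<in>{..<m} - {i}. (c::real)) = real m * (real m - 1) * c" for c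
  proof -
    have "(\<Sum>i<m. \<Sum>j\<in>{..<m} - {i}. c) = (\<Sum>i<m. (real m - 1) * c)"
    proof (rule sum.cong[OF refl])
      fix i assume "i \<in> {..<m}"
      then have "card ({..<m} - {i}) = m - 1" by (simp add: card_Diff_singleton)
      then show "(\<Sum>j\<in>{..<m} - {i}. c) = (real m - 1) * c" using assms(3) by (simp add: of_nat_diff)
    qed
    also have "\<dots> = real m * (real m - 1) * c" by simp
    finally show ?thesis .
  qed
  let ?v = "norm (x + y)"
  have orf: "rf_conformity M CARD('n) m ?v (orf_vecs W R e) = Gamma (real CARD('n) / 2) * (\<Sum>k. cK CARD('n) ?v k * EQv CARD('n) 0 k)"
  proof -
    have "(\<Sum>i<m. \<Sum>j\<in>{..<m} - {i}. integral\<^sup>L M (\<lambda>\<omega>. rf_kernel CARD('n) ?v (norm (orf_vecs W R e i \<omega> + orf_vecs W R e j \<omega>))))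
        = (\<Sum>i<m. \<Sum>j\<in>{..<m} - {i}. (\<Sum>k. cK CARD('n) ?v k * EQv CARD('n) 0 k))"
      unfolding orf_vecs_def
      by (intro sum.cong refl PI(1)) (use neq in fastforce)
    then show ?thesis unfolding rf_conformity_def sumconst using m0 by simp
  qed
  have sim: "rf_conformity M CARD('n) m ?v (simrf_vecs W R e) = Gamma (real CARD('n) / 2) *
      (\<Sum>k. cK CARD('n) ?v k * EQv CARD('n) (1 / (real CARD('n) - 1)) k)"
  proof -
    have "(\<Sum>i<m. \<Sum>j\<in>{..<m} - {i}. integral\<^sup>L M (\<lambda>\<omega>. rf_kernel CARD('n) ?v (norm (simrf_vecs W R e i \<omega> + simrf_vecs W R e j \<omega>))))
        = (\<Sum>i<m. \<Sum>j\<in>{..<m} - {i}. (\<Sum>k. cK CARD('n) ?v k * EQv CARD('n) (1 / (real CARD('n) - 1)) k))"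
      unfolding simrf_vecs_def
      by (intro sum.cong refl PI(3)) (use neq in fastforce)
    then show ?thesis unfolding rf_conformity_def sumconst using m0 by simp
  qed
  have mt: "- (1 / (real CARD('n) - 1)) = - 1 / (real CARD('n) - 1)" by simp
  have n01: "e 0 \<noteq> e 1" using neq[of 0 1] assms(3) by simp
  have o2: "summable (\<lambda>k. cK CARD('n) ?v k * EQv CARD('n) 0 k)" by (rule PI(2)[OF n01])
  have s2: "summable (\<lambda>k. cK CARD('n) ?v k * EQv CARD('n) (1 / (real CARD('n) - 1)) k)" by (rule PI(4)[OF n01])
  show ?thesis
  proof
    show "rf_conformity M CARD('n) m ?v (orf_vecs W R e) =
      Gamma (real CARD('n) / 2) / Gamma (real CARD('n)) *
             (\<Sum>k. ?v ^ (2*k) / (2 ^ k * fact k)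
                   * Gamma (real k + real CARD('n)) / Gamma (real k + real CARD('n) / 2))"
      unfolding orf by (rule orf_series[OF d2 o2])
    show "rf_conformity M CARD('n) m ?v (simrf_vecs W R e) =
      sqrt pi / (Gamma (real CARD('n) / 2) * 2 ^ (CARD('n) - 1)) *
             (\<Sum>k. Gamma (real k + real CARD('n)) / Gamma (real k + real CARD('n) / 2)
                   * ?v ^ (2*k) / 2 ^ k
                   * (\<Sum>p\<le>k. (- 1 / (real CARD('n) - 1)) ^ p
                        * Gamma ((real CARD('n) + real p) / 2)
                        / Gamma ((real CARD('n) + real p + 1) / 2)
                        / (fact (k - p) * fact p)))"
      unfolding sim using sim_series[OF d2 s2] unfolding mt .
  qed
qed

end
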